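(* Let $G$ be a flattened grammar with start symbol $S$, and let $\mathrm{CPS}(G)$ be its CPS transformation (with respect to an arbitrary fixed choice of CPS-triggering nonterminals), with start symbol $\hat S$. Then $G$ and $\mathrm{CPS}(G)$ generate the same language, i.e. for every $\lambda\in\Sigma^*$, $S\Rightarrow^*\lambda$ in $G$ if and only if $\hat S\Rightarrow^*\lambda$ in $\mathrm{CPS}(G)$.
   Context: BNF grammars and flattening. A BNF grammar over terminals $\Sigma$ is a list of rules $X\to e$, where $X$ is a nonterminal (called top-level) and $e$ is an expression: a single symbol; a concatenation $e_1\cdots e_n$ ($n\ge 0$, the case $n=0$ being $\varepsilon$); an alternation $e_1\mid\cdots\mid e_n$; an optional $e_1?$; or a repetition $e_1^*$. The procedure $\mathrm{Flatten}(X,e)$ emits context-free productions: (i) if $e=\alpha$ is a single symbol, emit $X\to\alpha$; (ii) if $e=e_1\cdots e_n$, for each $i$ let $\alpha_i=e_i$ if $e_i$ is a single symbol, and otherwise let $\alpha_i$ be a fresh nonterminal and call $\mathrm{Flatten}(\alpha_i,e_i)$; emit $X\to\alpha_1\cdots\alpha_n$; (iii) if $e=e_1\mid\cdots\mid e_n$, call $\mathrm{Flatten}(X,e_i)$ for each $i$; (iv) if $e=e_1?$, call $\mathrm{Flatten}(X,e_1\mid\varepsilon)$; (v) if $e=e_1^*$, let $\alpha$ be fresh, call $\mathrm{Flatten}(\alpha,e_1)$ and emit $X\to\alpha X$ and $X\to\varepsilon$. The flattened grammar $G$ consists of all productions emitted by $\mathrm{Flatten}(X,e)$ over all rules $X\to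 e$; its start symbol $S$ is a top-level nonterminal. CPS transformation. A nonterminal is CPS-eligible if it was created as a fresh symbol during flattening. Fix an arbitrary subset of the CPS-eligible nonterminals, called CPS-triggering (terminals and top-level nonterminals are never CPS-triggering). For every nonterminal $Y$ let $\hat Y$ be a new symbol; for a terminal $\sigma$ set $\hat\sigma=\sigma$. Define mutually recursive procedures. $\mathrm{CPSProd}(X\to\alpha_1\cdots\alpha_i\cdot\alpha_{i+1}\cdots\alpha_r,\ \tau)$, where $\tau$ is a string of symbols: if $i=0$, add the production $\hat X\to\tau$ to $\mathrm{CPS}(G)$; if $i>0$ and $\alpha_i$ is not CPS-triggering, call $\mathrm{CPSProd}(X\to\alpha_1\cdots\alpha_{i-1}\cdot\alpha_i\cdots\alpha_r,\ \hat\alpha_i\tau)$; if $i>0$, $\alpha_i$ is CPS-triggering, $i=r$ and $X=\alpha_r$ (i.e. the dotted production has the form $\alpha\to\gamma\alpha\,\cdot$), call $\mathrm{CPSProd}(X\to\alpha_1\cdots\alpha_{r-1}\cdot\alpha_r,\ \hat\alpha_r)$; otherwise ($\alpha_i$ CPS-triggering, not of that form) call $\mathrm{CPSSym}(\alpha_i,\tau)$ and then $\mathrm{CPSProd}(X\to\alpha_1\cdots\alpha_{i-1}\cdot\alpha_i\cdots\alpha_r,\ \hat\alpha_i)$. $\mathrm{CPSSym}(X,\tau)$: for each production $X\to\eta$ of $G$, call $\mathrm{CPSProd}(X\to\eta\,\cdot,\ \tau)$. The grammar $\mathrm{CPS}(G)$ consists of all productions added when $\mathrm{CPSSym}(X,\varepsilon)$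 is called for every non-CPS-triggering nonterminal $X$; its start symbol is $\hat S$. *)

theory Defs
  imports Main
begin

datatype ('t, 'a) sym = T 't | N 'a

type_synonym ('t, 'a) prod = "'a \<times> ('t, 'a) sym list"

definition derive1 :: "('t, 'a) prod set \<Rightarrow> ('t, 'a) sym list \<Rightarrow> ('t, 'a) sym list \<Rightarrow> bool" where
  "derive1 P u v \<longleftrightarrow> (\<exists>l r A w. u = l @ [N A] @ r \<and> (A, w) \<in> P \<and> v = l @ w @ r)"

definition derives :: "('t, 'a) prod set \<Rightarrow> ('t, 'a) sym list \<Rightarrow> ('t, 'a) sym list \<Rightarrow> bool" where
  "derives P = (derive1 P)\<^sup>*\<^sup>*"

definition nts :: "('t, 'a) prod set \<Rightarrow> 'a set" where
  "nts P = {A. \<exists>(B, w) \<in> P. A = B \<or> N A \<in> set w}"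

datatype ('t, 'n) expr =
    Sym "('t, 'n) sym"
  | Seq "('t, 'n) expr list"
  | Alt "('t, 'n) expr list"
  | Opt "('t, 'n) expr"
  | Star "('t, 'n) expr"

fun is_Sym :: "('t, 'n) expr \<Rightarrow> bool" where
  "is_Sym (Sym _) = True"
| "is_Sym _ = False"

text \<open>A fresh nonterminal is named by the index of the BNF rule and the position
  (path) of the subexpression it was created for; this makes all fresh symbols
  pairwise distinct and distinct from the top-level ones.\<close>
datatype 'n fnt = Top 'n | Fresh nat "nat list"

fun lift_sym :: "('t, 'n) sym \<Rightarrow> ('t, 'n fnt) sym" where
  "lift_sym (T t) = T t"
| "lift_sym (N n) = N (Top n)"

fun seq_sym :: "nat \<Rightarrow> nat list \<Rightarrow> nat \<Rightarrow> ('t, 'n) expr \<Rightarrow> ('t, 'n fnt) sym" where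
  "seq_sym i p k (Sym a) = lift_sym a"
| "seq_sym i p k e = N (Fresh i (p @ [k]))"

text \<open>\<open>emits i p X e r\<close>: the production \<open>r\<close> is emitted by \<open>Flatten(X, e)\<close>, where
  \<open>e\<close> is the subexpression at path \<open>p\<close> of rule number \<open>i\<close>.
  \<open>Flatten(X, e?) = Flatten(X, e | \<epsilon>)\<close> is unfolded directly.\<close>
inductive emits :: "nat \<Rightarrow> nat list \<Rightarrow> 'n fnt \<Rightarrow> ('t, 'n) expr \<Rightarrow> ('t, 'n fnt) prod \<Rightarrow> bool"
  where
  sym: "emits i p X (Sym a) (X, [lift_sym a])"
| seq: "emits i p X (Seq es) (X, map (\<lambda>k. seq_sym i p k (es ! k)) [0..<length es])"
| seq_sub: "\<lbrakk>k < length es; \<not> is_Sym (es ! k);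
             emits i (p @ [k]) (Fresh i (p @ [k])) (es ! k) r\<rbrakk>
           \<Longrightarrow> emits i p X (Seq es) r"
| alt: "\<lbrakk>k < length es; emits i (p @ [k]) X (es ! k) r\<rbrakk> \<Longrightarrow> emits i p X (Alt es) r"
| opt_sub: "emits i (p @ [0]) X e r \<Longrightarrow> emits i p X (Opt e) r"
| opt_eps: "emits i p X (Opt e) (X, [])"
| star_sub: "emits i (p @ [0]) (Fresh i (p @ [0])) e r \<Longrightarrow> emits i p X (Star e) r"
| star_cons: "emits i p X (Star e) (X, [N (Fresh i (p @ [0])), N X])"
| star_nil: "emits i p X (Star e) (X, [])"

definition flatten :: "('n \<times> ('t, 'n) expr) list \<Rightarrow> ('t, 'n fnt) prod set" where
  "flatten rules = {r. \<exists>i < length rules. emits i [] (Top (fst (rules ! i))) (snd (rules ! i)) r}"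

definition cps_eligible :: "('t, 'n fnt) prod set \<Rightarrow> 'n fnt \<Rightarrow> bool" where
  "cps_eligible G X \<longleftrightarrow> (\<exists>i q. X = Fresh i q) \<and> X \<in> nts G"

datatype 'a hat = Hat 'a

fun hat_sym :: "('t, 'a) sym \<Rightarrow> ('t, 'a hat) sym" where
  "hat_sym (T t) = T t"
| "hat_sym (N Y) = N (Hat Y)"

fun trig :: "'a set \<Rightarrow> ('t, 'a) sym \<Rightarrow> bool" where
  "trig Tr (T _) = False"
| "trig Tr (N Y) = (Y \<in> Tr)"

text \<open>The calls made by the procedures.  \<open>cps_prod G Tr X \<eta> i \<tau>\<close> means that
  \<open>CPSProd(X \<rightarrow> \<alpha>\<^sub>1\<dots>\<alpha>\<^sub>i \<cdot> \<alpha>\<^sub>i\<^sub>+\<^sub>1\<dots>\<alpha>\<^sub>r, \<tau>)\<close> is called, where \<open>\<eta> = \<alpha>\<^sub>1\<dots>\<alpha>\<^sub>r\<close>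
  (so \<open>\<alpha>\<^sub>i = \<eta> ! (i - 1)\<close>); \<open>cps_sym G Tr X \<tau>\<close> means that \<open>CPSSym(X, \<tau>)\<close> is called.\<close>
inductive cps_prod :: "('t, 'a) prod set \<Rightarrow> 'a set \<Rightarrow> 'a \<Rightarrow> ('t, 'a) sym list \<Rightarrow> nat
                       \<Rightarrow> ('t, 'a hat) sym list \<Rightarrow> bool"
  and cps_sym :: "('t, 'a) prod set \<Rightarrow> 'a set \<Rightarrow> 'a \<Rightarrow> ('t, 'a hat) sym list \<Rightarrow> bool"
  for G :: "('t, 'a) prod set" and Tr :: "'a set"
  where
  start: "\<lbrakk>X \<in> nts G; X \<notin> Tr\<rbrakk> \<Longrightarrow> cps_sym G Tr X []"
| sym_call: "\<lbrakk>cps_sym G Tr X \<tau>; (X, \<eta>) \<in> G\<rbrakk> \<Longrightarrow> cps_prod G Tr X \<eta> (length \<eta>) \<tau>"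
| nontrig: "\<lbrakk>cps_prod G Tr X \<eta> i \<tau>; 0 < i; \<not> trig Tr (\<eta> ! (i - 1))\<rbrakk>
            \<Longrightarrow> cps_prod G Tr X \<eta> (i - 1) (hat_sym (\<eta> ! (i - 1)) # \<tau>)"
| selfloop: "\<lbrakk>cps_prod G Tr X \<eta> i \<tau>; 0 < i; X \<in> Tr; i = length \<eta>; \<eta> ! (i - 1) = N X\<rbrakk>
            \<Longrightarrow> cps_prod G Tr X \<eta> (i - 1) [N (Hat X)]"
| trig_sym: "\<lbrakk>cps_prod G Tr X \<eta> i \<tau>; 0 < i; \<eta> ! (i - 1) = N Y; Y \<in> Tr;
              \<not> (i = length \<eta> \<and> Y = X)\<rbrakk>
            \<Longrightarrow> cps_sym G Tr Y \<tau>"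
| trig_prod: "\<lbrakk>cps_prod G Tr X \<eta> i \<tau>; 0 < i; \<eta> ! (i - 1) = N Y; Y \<in> Tr;
              \<not> (i = length \<eta> \<and> Y = X)\<rbrakk>
            \<Longrightarrow> cps_prod G Tr X \<eta> (i - 1) [N (Hat Y)]"

text \<open>Productions added (case \<open>i = 0\<close> of CPSProd).\<close>
definition CPS :: "('t, 'a) prod set \<Rightarrow> 'a set \<Rightarrow> ('t, 'a hat) prod set" where
  "CPS G Tr = {(Hat X, \<tau>) | X \<eta> \<tau>. cps_prod G Tr X \<eta> 0 \<tau>}"

end

theory Submission
  imports Defs
begin


inductive gn :: "('t, 'a) prod set \<Rightarrow> nat \<Rightarrow> ('t, 'a) sym list \<Rightarrow> 't list \<Rightarrow> bool" for P where
  gn_nil: "gn P 0 [] []"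
| gn_T: "gn P n xs w \<Longrightarrow> gn P (Suc n) (T a # xs) (a # w)"
| gn_N: "(A, \<alpha>) \<in> P \<Longrightarrow> gn P n1 \<alpha> w1 \<Longrightarrow> gn P n2 xs w2 \<Longrightarrow> gn P (Suc (n1 + n2)) (N A # xs) (w1 @ w2)"

inductive_cases gnE_Nil[elim!]: "gn P n [] w"
inductive_cases gnE_T[elim!]: "gn P n (T a # xs) w"
inductive_cases gnE_N[elim!]: "gn P n (N A # xs) w"

lemma gn_app: "gn P n1 xs w1 \<Longrightarrow> gn P n2 ys w2 \<Longrightarrow> gn P (n1 + n2) (xs @ ys) (w1 @ w2)"
proof (induction rule: gn.induct)
  case gn_nil then show ?case by simp
next
  case (gn_T n xs w a) then show ?case using gn.gn_T by fastforce
next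
  case (gn_N A \<alpha> n1 w1 n2' xs w2')
  have "gn P (Suc (n1 + (n2' + n2))) (N A # (xs @ ys)) (w1 @ (w2' @ w2))"
    using gn_N by (intro gn.gn_N) auto
  then show ?case by (simp add: add.assoc)
qed

lemma gn_split: "gn P n (xs @ ys) w \<Longrightarrow> \<exists>n1 n2 w1 w2. n = n1 + n2 \<and> w = w1 @ w2 \<and> gn P n1 xs w1 \<and> gn P n2 ys w2"
proof (induction xs arbitrary: n w)
  case Nil then show ?case using gn_nil[of P] by (intro exI[of _ 0] exI[of _ n] exI[of _ "[]"] exI[of _ w]) auto
next
  case (Cons x xs)
  show ?case
  proof (cases x)
    case (T a)
    with Cons.prems obtain n' w' where "n = Suc n'" "w = a # w'" "gn P n' (xs @ ys) w'" by auto
    moreover from Cons.IH[OF this(3)] obtain m1 m2 v1 v2 where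
      "n' = m1 + m2" "w' = v1 @ v2" "gn P m1 xs v1" "gn P m2 ys v2" by blast
    ultimately show ?thesis using T gn_T[of P m1 xs v1 a]
      by (intro exI[of _ "Suc m1"] exI[of _ m2] exI[of _ "a # v1"] exI[of _ v2]) auto
  next
    case (N A)
    with Cons.prems obtain n1 n2 w1 w2 \<alpha> where "n = Suc (n1 + n2)" "w = w1 @ w2" "(A, \<alpha>) \<in> P"
       "gn P n1 \<alpha> w1" "gn P n2 (xs @ ys) w2" by auto
    moreover from Cons.IH[OF this(5)] obtain m1 m2 v1 v2 where
      "n2 = m1 + m2" "w2 = v1 @ v2" "gn P m1 xs v1" "gn P m2 ys v2" by blast
    ultimately show ?thesis using N gn_N[of A \<alpha> P n1 w1 m1 xs v1]
      by (intro exI[of _ "Suc (n1 + m1)"] exI[of _ m2] exI[of _ "w1 @ v1"] exI[of _ v2]) auto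
  qed
qed

lemma derive1_ctx: "derive1 P u v \<Longrightarrow> derive1 P (x @ u @ y) (x @ v @ y)"
proof -
  assume "derive1 P u v"
  then obtain l r A w where "u = l @ [N A] @ r" "(A, w) \<in> P" "v = l @ w @ r"
    unfolding derive1_def by blast
  then show ?thesis unfolding derive1_def
    by (intro exI[of _ "x @ l"] exI[of _ "r @ y"] exI[of _ A] exI[of _ w]) auto
qed

lemma derives_ctx: "derives P u v \<Longrightarrow> derives P (x @ u @ y) (x @ v @ y)"
  unfolding derives_def
  by (induction rule: rtranclp.induct) (auto intro: rtranclp.rtrancl_into_rtrancl derive1_ctx)

lemma gn_derives: "gn P n \<alpha> w \<Longrightarrow> derives P \<alpha> (map T w)"
proof (induction rule: gn.induct)
  case gn_nil then show ?case by (simp add: derives_def)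
next
  case (gn_T n xs w a)
  then show ?case using derives_ctx[of P xs "map T w" "[T a]" "[]"] by simp
next
  case (gn_N A \<alpha> n1 w1 n2 xs w2)
  have 1: "derive1 P (N A # xs) (\<alpha> @ xs)" unfolding derive1_def
    using gn_N(1) by (intro exI[of _ "[]"] exI[of _ xs] exI[of _ A] exI[of _ \<alpha>]) auto
  have 2: "derives P (\<alpha> @ xs) (map T w1 @ xs)" using derives_ctx[OF gn_N(4), of "[]" xs] by simp
  have 3: "derives P (map T w1 @ xs) (map T w1 @ map T w2)"
    using derives_ctx[OF gn_N(5), of "map T w1" "[]"] by simp
  show ?case using 1 2 3 unfolding derives_def
    by (simp add: converse_rtranclp_into_rtranclp rtranclp_trans)
qed

lemma gn_map: "gn P (length w) (map T w) w"
  by (induction w) (auto intro: gn.intros)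

lemma derives_gn: "derives P \<alpha> (map T w) \<Longrightarrow> \<exists>n. gn P n \<alpha> w"
  unfolding derives_def
proof (induction rule: converse_rtranclp_induct)
  case base then show ?case using gn_map by blast
next
  case (step y z)
  then obtain n where n: "gn P n z w" by blast
  from step(1) obtain l r A \<gamma> where y: "y = l @ [N A] @ r" "(A, \<gamma>) \<in> P" "z = l @ \<gamma> @ r"
    unfolding derive1_def by blast
  from gn_split[of P n l "\<gamma> @ r" w] n y(3) obtain n1 n2 w1 w2 where
    a: "w = w1 @ w2" "gn P n1 l w1" "gn P n2 (\<gamma> @ r) w2" by auto
  from gn_split[OF a(3)] obtain m1 m2 v1 v2 where b: "w2 = v1 @ v2" "gn P m1 \<gamma> v1" "gn P m2 r v2" by auto
  have "gn P (Suc (m1 + m2)) (N A # r) (v1 @ v2)" using gn_N[OF y(2) b(2) b(3)] .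
  from gn_app[OF a(2) this] show ?case using y(1) a(1) b(1) by auto
qed



fun cc :: "'a set \<Rightarrow> ('t,'a) sym list \<Rightarrow> ('t,'a hat) sym list \<Rightarrow> ('t,'a hat) sym list" where
  "cc Tr [] \<tau> = \<tau>"
| "cc Tr (a # s) \<tau> = (if trig Tr a then [hat_sym a] else hat_sym a # cc Tr s \<tau>)"

lemma drop_Cons_iff: "drop i \<eta> = x # xs \<longleftrightarrow> i < length \<eta> \<and> \<eta> ! i = x \<and> drop (Suc i) \<eta> = xs"
  by (metis Cons_nth_drop_Suc drop_all list.distinct(1) list.inject not_le)

lemma cc_drop: "i < length \<eta> \<Longrightarrow> cc Tr (drop i \<eta>) \<tau> =
   (if trig Tr (\<eta> ! i) then [hat_sym (\<eta>!i)] else hat_sym (\<eta>!i) # cc Tr (drop (Suc i) \<eta>) \<tau>)"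
  by (simp add: Cons_nth_drop_Suc[symmetric])

lemma C1:
  shows "cps_prod G Tr X \<eta> i \<tau> \<Longrightarrow> \<exists>\<tau>0. cps_sym G Tr X \<tau>0 \<and> (X,\<eta>) \<in> G \<and> i \<le> length \<eta> \<and> \<tau> = cc Tr (drop i \<eta>) \<tau>0"
    and "cps_sym G Tr Y \<sigma> \<Longrightarrow> True"
proof (induction rule: cps_prod_cps_sym.inducts)
  case (sym_call X \<tau> \<eta>) then show ?case by auto
next
  case (nontrig X \<eta> i \<tau>)
  then obtain \<tau>0 where h: "cps_sym G Tr X \<tau>0" "(X,\<eta>) \<in> G" "i \<le> length \<eta>" "\<tau> = cc Tr (drop i \<eta>) \<tau>0" by blast
  obtain j where j: "i = Suc j" using \<open>0 < i\<close> gr0_implies_Suc by blast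
  have "cc Tr (drop (i-1) \<eta>) \<tau>0 = hat_sym (\<eta> ! (i - 1)) # \<tau>"
    using cc_drop[of j \<eta> Tr \<tau>0] h \<open>\<not> trig Tr (\<eta> ! (i - 1))\<close> j by simp
  with h show ?case by (intro exI[of _ \<tau>0]) auto
next
  case (selfloop X \<eta> i \<tau>)
  then obtain \<tau>0 where h: "cps_sym G Tr X \<tau>0" "(X,\<eta>) \<in> G" "i \<le> length \<eta>" by blast
  obtain j where j: "i = Suc j" using \<open>0 < i\<close> gr0_implies_Suc by blast
  have "cc Tr (drop j \<eta>) \<tau>0 = [N (Hat X)]"
    using cc_drop[of j \<eta> Tr \<tau>0] h(3) \<open>X \<in> Tr\<close> \<open>\<eta> ! (i - 1) = N X\<close> j by simp
  then have "cc Tr (drop (i-1) \<eta>) \<tau>0 = [N (Hat X)]" using j by simp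
  with h show ?case by (intro exI[of _ \<tau>0]) auto
next
  case (trig_sym X \<eta> i \<tau> Y) then show ?case by simp
next
  case (trig_prod X \<eta> i \<tau> Y)
  then obtain \<tau>0 where h: "cps_sym G Tr X \<tau>0" "(X,\<eta>) \<in> G" "i \<le> length \<eta>" by blast
  obtain j where j: "i = Suc j" using \<open>0 < i\<close> gr0_implies_Suc by blast
  have "cc Tr (drop j \<eta>) \<tau>0 = [N (Hat Y)]"
    using cc_drop[of j \<eta> Tr \<tau>0] h(3) \<open>Y \<in> Tr\<close> \<open>\<eta> ! (i - 1) = N Y\<close> j by simp
  then have "cc Tr (drop (i-1) \<eta>) \<tau>0 = [N (Hat Y)]" using j by simp
  with h show ?case by (intro exI[of _ \<tau>0]) auto
qed (simp)

lemma C2: "cps_sym G Tr X \<tau>0 \<Longrightarrow> (X,\<eta>) \<in> G \<Longrightarrow> i \<le> length \<eta> \<Longrightarrow> cps_prod G Tr X \<eta> i (cc Tr (drop i \<eta>) \<tau>0)"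
proof (induction "length \<eta> - i" arbitrary: i)
  case 0
  then have "i = length \<eta>" by simp
  then show ?case using sym_call[OF 0(2,3)] by simp
next
  case (Suc k)
  then have lt: "i < length \<eta>" by simp
  have IH: "cps_prod G Tr X \<eta> (Suc i) (cc Tr (drop (Suc i) \<eta>) \<tau>0)"
    using Suc by simp
  show ?case
  proof (cases "trig Tr (\<eta> ! i)")
    case False
    from nontrig[OF IH] False lt show ?thesis using cc_drop[OF lt] by simp
  next
    case True
    then obtain Y where Y: "\<eta> ! i = N Y" "Y \<in> Tr" by (cases "\<eta> ! i") auto
    show ?thesis
    proof (cases "Suc i = length \<eta> \<and> Y = X")
      case True
      have "cps_prod G Tr X \<eta> (Suc i - 1) [N (Hat X)]"
        by (rule selfloop[OF IH]) (use True Y in \<open>simp_all add: True[THEN conjunct1, symmetric]\<close>)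
      moreover have "Suc i - 1 = i" by simp
      ultimately show ?thesis using cc_drop[OF lt] True Y by simp
    next
      case False
      have "cps_prod G Tr X \<eta> (Suc i - 1) [N (Hat Y)]"
        by (rule trig_prod[OF IH _ _ Y(2)]) (use False Y in auto)
      then show ?thesis using cc_drop[OF lt] True Y by simp
    qed
  qed
qed

lemma Lchild: "cps_sym G Tr X \<tau>0 \<Longrightarrow> (X,\<eta>) \<in> G \<Longrightarrow> i < length \<eta> \<Longrightarrow> \<eta> ! i = N A \<Longrightarrow> A \<in> Tr
   \<Longrightarrow> cps_sym G Tr A (cc Tr (drop (Suc i) \<eta>) \<tau>0)"
proof -
  assume a: "cps_sym G Tr X \<tau>0" "(X,\<eta>) \<in> G" "i < length \<eta>" "\<eta> ! i = N A" "A \<in> Tr"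
  have p: "cps_prod G Tr X \<eta> (Suc i) (cc Tr (drop (Suc i) \<eta>) \<tau>0)" using C2[OF a(1,2)] a(3) by simp
  show ?thesis
  proof (cases "Suc i = length \<eta> \<and> A = X")
    case True then show ?thesis using a(1) by simp
  next
    case False then show ?thesis using trig_sym[OF p _ _ a(5)] a(4) by simp
  qed
qed

lemma C3: "cps_sym G Tr Y \<tau> \<Longrightarrow> Y \<in> Tr \<Longrightarrow> \<exists>X \<eta> j \<tau>0. (X,\<eta>) \<in> G \<and> j < length \<eta> \<and> \<eta> ! j = N Y
   \<and> \<not> (Suc j = length \<eta> \<and> Y = X) \<and> cps_sym G Tr X \<tau>0 \<and> \<tau> = cc Tr (drop (Suc j) \<eta>) \<tau>0"
proof (erule cps_sym.cases)
  fix X \<eta> i \<tau>' Y'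
  assume h: "Y = Y'" "\<tau> = \<tau>'" "cps_prod G Tr X \<eta> i \<tau>'" "0 < i" "\<eta> ! (i - 1) = N Y'" "Y' \<in> Tr"
     "\<not> (i = length \<eta> \<and> Y' = X)"
  from C1(1)[OF h(3)] obtain \<tau>0 where c: "cps_sym G Tr X \<tau>0" "(X,\<eta>) \<in> G" "i \<le> length \<eta>" "\<tau>' = cc Tr (drop i \<eta>) \<tau>0"
    by blast
  show ?thesis using h c by (intro exI[of _ X] exI[of _ \<eta>] exI[of _ "i-1"] exI[of _ \<tau>0]) auto
qed auto

lemma notTr: "cps_sym G Tr Y \<tau> \<Longrightarrow> Y \<notin> Tr \<Longrightarrow> \<tau> = []"
  by (erule cps_sym.cases) auto

lemma CPS_prodE: "(Hat B, \<gamma>) \<in> CPS G Tr \<Longrightarrow> \<exists>\<tau>' \<eta>'. cps_sym G Tr B \<tau>' \<and> (B,\<eta>') \<in> G \<and> \<gamma> = cc Tr \<eta>' \<tau>'"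
  unfolding CPS_def using C1(1) by fastforce

lemma CPS_prodI: "cps_sym G Tr B \<tau>' \<Longrightarrow> (B,\<eta>') \<in> G \<Longrightarrow> (Hat B, cc Tr \<eta>' \<tau>') \<in> CPS G Tr"
  unfolding CPS_def using C2[of G Tr B \<tau>' \<eta>' 0] by auto

lemma D1: "gn G n ys w \<Longrightarrow> (X,\<eta>) \<in> G \<Longrightarrow> cps_sym G Tr X \<tau>0 \<Longrightarrow> ys = drop i \<eta>
   \<Longrightarrow> gn (CPS G Tr) m \<tau>0 v \<Longrightarrow> \<exists>n'. gn (CPS G Tr) n' (cc Tr (drop i \<eta>) \<tau>0) (w @ v)"
proof (induction arbitrary: X \<eta> i \<tau>0 m v rule: gn.induct)
  case gn_nil then show ?case by (metis append_Nil cc.simps(1))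
next
  case (gn_T n xs w a)
  from gn_T.prems(3) have d: "i < length \<eta>" "\<eta> ! i = T a" "drop (Suc i) \<eta> = xs"
    using drop_Cons_iff by metis+
  from gn_T.IH[OF gn_T.prems(1,2) d(3)[symmetric] gn_T.prems(4)] obtain n' where
    "gn (CPS G Tr) n' (cc Tr xs \<tau>0) (w @ v)" using d(3) by auto
  moreover have "cc Tr (drop i \<eta>) \<tau>0 = T a # cc Tr xs \<tau>0" using gn_T.prems(3)[symmetric] by simp
  ultimately show ?case by (metis append_Cons gn.gn_T)
next
  case (gn_N A \<alpha> n1 w1 n2 xs w2)
  from gn_N.prems(3) have d: "i < length \<eta>" "\<eta> ! i = N A" "drop (Suc i) \<eta> = xs"
    using drop_Cons_iff by metis+
  from gn_N.IH(2)[OF gn_N.prems(1,2) d(3)[symmetric] gn_N.prems(4)] obtain n' where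
    ih2: "gn (CPS G Tr) n' (cc Tr xs \<tau>0) (w2 @ v)" using d(3) by auto
  show ?case
  proof (cases "A \<in> Tr")
    case True
    have cs: "cps_sym G Tr A (cc Tr xs \<tau>0)" using Lchild[OF gn_N.prems(2,1) d(1,2) True] d(3) by simp
    from gn_N.IH(1)[OF gn_N.hyps(1) cs _ ih2, of 0] obtain k where
      "gn (CPS G Tr) k (cc Tr \<alpha> (cc Tr xs \<tau>0)) (w1 @ w2 @ v)" by auto
    from gn.gn_N[OF CPS_prodI[OF cs gn_N.hyps(1)] this gn_nil]
    show ?thesis using gn_N.prems(3)[symmetric] True by (simp) (rule exI)
  next
    case False
    have cs: "cps_sym G Tr A []" using start[of A G Tr] False gn_N.hyps(1) unfolding nts_def by blast
    from gn_N.IH(1)[OF gn_N.hyps(1) cs _ gn_nil, of 0] obtain k where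
      "gn (CPS G Tr) k (cc Tr \<alpha> []) w1" by auto
    from gn.gn_N[OF CPS_prodI[OF cs gn_N.hyps(1)] this ih2]
    show ?thesis using gn_N.prems(3)[symmetric] False by (simp) (rule exI)
  qed
qed

lemma D2:
  assumes U: "\<forall>Y \<tau>1 \<tau>2. cps_sym G Tr Y \<tau>1 \<longrightarrow> cps_sym G Tr Y \<tau>2 \<longrightarrow> \<tau>1 = \<tau>2"
  shows "gn (CPS G Tr) n \<beta> u \<Longrightarrow> (X,\<eta>) \<in> G \<Longrightarrow> cps_sym G Tr X \<tau>0 \<Longrightarrow> \<beta> = cc Tr (drop i \<eta>) \<tau>0
   \<Longrightarrow> \<exists>w v m. u = w @ v \<and> (\<exists>k. gn G k (drop i \<eta>) w) \<and> gn (CPS G Tr) m \<tau>0 v \<and> m \<le> n"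
proof (induction n arbitrary: \<beta> u X \<eta> \<tau>0 i rule: less_induct)
  case (less n)
  show ?case
  proof (cases "i < length \<eta>")
    case False
    then have "drop i \<eta> = []" by simp
    then show ?thesis using less.prems gn_nil by (intro exI[of _ "[]"] exI[of _ u] exI[of _ n]) auto
  next
    case lt: True
    have dd: "drop i \<eta> = \<eta> ! i # drop (Suc i) \<eta>" using lt by (simp add: Cons_nth_drop_Suc)
    show ?thesis
    proof (cases "\<eta> ! i")
      case (T t)
      with less.prems(4) cc_drop[OF lt] have b: "\<beta> = T t # cc Tr (drop (Suc i) \<eta>) \<tau>0" by simp
      with less.prems(1) obtain n' u' where h: "n = Suc n'" "u = t # u'" "gn (CPS G Tr) n' (cc Tr (drop (Suc i) \<eta>) \<tau>0) u'"
        by auto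
      from less.IH[of n', OF _ h(3) less.prems(2,3) refl] h(1) obtain w v m k where
        r: "u' = w @ v" "gn G k (drop (Suc i) \<eta>) w" "gn (CPS G Tr) m \<tau>0 v" "m \<le> n'"
        by auto
      have "gn G (Suc k) (drop i \<eta>) (t # w)" using dd T gn.gn_T[OF r(2)] by simp
      then show ?thesis using r h by (intro exI[of _ "t # w"] exI[of _ v] exI[of _ m]) auto
    next
      case (N B)
      show ?thesis
      proof (cases "B \<in> Tr")
        case False
        with less.prems(4) cc_drop[OF lt] N have b: "\<beta> = N (Hat B) # cc Tr (drop (Suc i) \<eta>) \<tau>0" by simp
        with less.prems(1) obtain n1 n2 u1 u2 \<gamma> where h: "n = Suc (n1 + n2)" "u = u1 @ u2"
          "(Hat B, \<gamma>) \<in> CPS G Tr" "gn (CPS G Tr) n1 \<gamma> u1" "gn (CPS G Tr) n2 (cc Tr (drop (Suc i) \<eta>) \<tau>0) u2"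
          by auto
        from CPS_prodE[OF h(3)] obtain \<tau>' \<eta>' where p: "cps_sym G Tr B \<tau>'" "(B,\<eta>') \<in> G" "\<gamma> = cc Tr \<eta>' \<tau>'"
          by blast
        have "\<tau>' = []" using notTr[OF p(1) False] .
        from less.IH[of n1, OF _ h(4) p(2,1), of 0] h(1) p(3) obtain w1 v1 m1 k1 where
          r1: "u1 = w1 @ v1" "gn G k1 \<eta>' w1" "gn (CPS G Tr) m1 \<tau>' v1" by auto
        have "v1 = []" using r1(3) \<open>\<tau>' = []\<close> by auto
        from less.IH[of n2, OF _ h(5) less.prems(2,3) refl] h(1) obtain w2 v2 m2 k2 where
          r2: "u2 = w2 @ v2" "gn G k2 (drop (Suc i) \<eta>) w2" "gn (CPS G Tr) m2 \<tau>0 v2" "m2 \<le> n2"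
          by auto
        have "gn G (Suc (k1 + k2)) (drop i \<eta>) (w1 @ w2)" using dd N gn.gn_N[OF p(2) r1(2) r2(2)] by simp
        then show ?thesis using r1 r2 h \<open>v1 = []\<close>
          by (intro exI[of _ "w1 @ w2"] exI[of _ v2] exI[of _ m2]) auto
      next
        case True
        with less.prems(4) cc_drop[OF lt] N have b: "\<beta> = [N (Hat B)]" by simp
        with less.prems(1) obtain n1 u1 \<gamma> where h: "n = Suc n1" "u = u1"
          "(Hat B, \<gamma>) \<in> CPS G Tr" "gn (CPS G Tr) n1 \<gamma> u1"
          by auto
        from CPS_prodE[OF h(3)] obtain \<tau>' \<eta>' where p: "cps_sym G Tr B \<tau>'" "(B,\<eta>') \<in> G" "\<gamma> = cc Tr \<eta>' \<tau>'"
          by blast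
        have "cps_sym G Tr B (cc Tr (drop (Suc i) \<eta>) \<tau>0)"
          using Lchild[OF less.prems(3,2) lt N True] .
        with U p(1) have tt: "\<tau>' = cc Tr (drop (Suc i) \<eta>) \<tau>0" by blast
        from less.IH[of n1, OF _ h(4) p(2,1), of 0] h(1) p(3) obtain w1 v1 m1 k1 where
          r1: "u1 = w1 @ v1" "gn G k1 \<eta>' w1" "gn (CPS G Tr) m1 \<tau>' v1" "m1 \<le> n1" by auto
        from less.IH[of m1, OF _ r1(3)[unfolded tt] less.prems(2,3) refl] h(1) r1(4) obtain w2 v2 m2 k2 where
          r2: "v1 = w2 @ v2" "gn G k2 (drop (Suc i) \<eta>) w2" "gn (CPS G Tr) m2 \<tau>0 v2" "m2 \<le> m1"
          by auto
        have "gn G (Suc (k1 + k2)) (drop i \<eta>) (w1 @ w2)" using dd N gn.gn_N[OF p(2) r1(2) r2(2)] by simp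
        then show ?thesis using r1 r2 h
          by (intro exI[of _ "w1 @ w2"] exI[of _ v2] exI[of _ m2]) auto
      qed
    qed
  qed
qed



fun mu :: "'n fnt \<Rightarrow> nat" where
  "mu (Top _) = 0"
| "mu (Fresh _ q) = Suc (length q)"

lemma seq_sym_Fresh: "seq_sym i p k e = N (Fresh i' q) \<Longrightarrow> i' = i \<and> q = p @ [k] \<and> \<not> is_Sym e"
  by (cases e) (auto elim: lift_sym.elims)

lemma lift_sym_not_Fresh: "lift_sym a \<noteq> N (Fresh i q)"
  by (cases a) auto

inductive_cases emitsE_Sym: "emits i p X (Sym a) r"
inductive_cases emitsE_Seq: "emits i p X (Seq es) r"
inductive_cases emitsE_Alt: "emits i p X (Alt es) r"
inductive_cases emitsE_Opt: "emits i p X (Opt e) r"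
inductive_cases emitsE_Star: "emits i p X (Star e) r"

lemma I1: "emits i p X e r \<Longrightarrow> mu X \<le> Suc (length p) \<Longrightarrow> j < length (snd r) \<Longrightarrow> snd r ! j = N (Fresh i' q)
  \<Longrightarrow> \<not> (Suc j = length (snd r) \<and> Fresh i' q = fst r)
  \<Longrightarrow> i' = i \<and> (\<exists>k q'. q = p @ k # q') \<and> mu (fst r) < mu (Fresh i' q)"
proof (induction arbitrary: j rule: emits.induct)
  case (sym i p X a)
  then have "lift_sym a = N (Fresh i' q)" by simp
  then show ?case using lift_sym_not_Fresh by blast
next
  case (seq i p X es)
  then have "seq_sym i p j (es ! j) = N (Fresh i' q)" by simp
  from seq_sym_Fresh[OF this] seq.prems show ?case by auto
next
  case (seq_sub k es i p r X)
  from seq_sub.IH[OF _ seq_sub.prems(2-4)] show ?case by auto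
next
  case (alt k es i p X r)
  from alt.IH[OF _ alt.prems(2-4)] alt.prems(1) show ?case by auto
next
  case (opt_sub i p X e r)
  from opt_sub.IH[OF _ opt_sub.prems(2-4)] opt_sub.prems(1) show ?case by auto
next
  case (opt_eps i p X e) then show ?case by simp
next
  case (star_sub i p e r X)
  from star_sub.IH[OF _ star_sub.prems(2-4)] show ?case by auto
next
  case (star_cons i p X e)
  then show ?case by (cases j) auto
next
  case (star_nil i p X e) then show ?case by simp
qed

lemma emits_Seq_inv: "emits i p X (Seq es) r \<Longrightarrow> r = (X, map (\<lambda>k. seq_sym i p k (es ! k)) [0..<length es])
   \<or> (\<exists>k<length es. \<not> is_Sym (es ! k) \<and> emits i (p @ [k]) (Fresh i (p @ [k])) (es ! k) r)"
  by (erule emitsE_Seq) auto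

lemma emits_Alt_inv: "emits i p X (Alt es) r \<Longrightarrow> (\<exists>k<length es. emits i (p @ [k]) X (es ! k) r)"
  by (erule emitsE_Alt) auto

lemma emits_Opt_inv: "emits i p X (Opt e) r \<Longrightarrow> r = (X, []) \<or> emits i (p @ [0]) X e r"
  by (erule emitsE_Opt) auto

lemma emits_Star_inv: "emits i p X (Star e) r \<Longrightarrow> r = (X, []) \<or> r = (X, [N (Fresh i (p @ [0])), N X])
   \<or> emits i (p @ [0]) (Fresh i (p @ [0])) e r"
  by (erule emitsE_Star) auto

lemma I2: "emits i p X e r1 \<Longrightarrow> emits i p X e r2 \<Longrightarrow> mu X \<le> Suc (length p)
  \<Longrightarrow> j1 < length (snd r1) \<Longrightarrow> snd r1 ! j1 = N (Fresh i q) \<Longrightarrow> \<not> (Suc j1 = length (snd r1) \<and> Fresh i q = fst r1)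
  \<Longrightarrow> j2 < length (snd r2) \<Longrightarrow> snd r2 ! j2 = N (Fresh i q) \<Longrightarrow> \<not> (Suc j2 = length (snd r2) \<and> Fresh i q = fst r2)
  \<Longrightarrow> r1 = r2 \<and> j1 = j2"
proof (induction arbitrary: r2 j1 j2 rule: emits.induct)
  case (sym i p X a)
  then have "lift_sym a = N (Fresh i q)" by simp
  then show ?case using lift_sym_not_Fresh by blast
next
  case (seq i p X es)
  then have "seq_sym i p j1 (es ! j1) = N (Fresh i q)" by simp
  from seq_sym_Fresh[OF this] have q: "q = p @ [j1]" by simp
  from emits_Seq_inv[OF seq.prems(1)] show ?case
  proof
    assume r2: "r2 = (X, map (\<lambda>k. seq_sym i p k (es ! k)) [0..<length es])"
    with seq.prems have "seq_sym i p j2 (es ! j2) = N (Fresh i q)" by simp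
    from seq_sym_Fresh[OF this] q r2 show ?thesis by simp
  next
    assume "\<exists>k<length es. \<not> is_Sym (es ! k) \<and> emits i (p @ [k]) (Fresh i (p @ [k])) (es ! k) r2"
    then obtain k where k: "emits i (p @ [k]) (Fresh i (p @ [k])) (es ! k) r2" by blast
    from I1[OF k _ seq.prems(6-8)] q show ?thesis by auto
  qed
next
  case (seq_sub k es i p r X)
  from I1[OF seq_sub.hyps(3) _ seq_sub.prems(3-5)] obtain k1 q1 where q: "q = (p @ [k]) @ k1 # q1" by auto
  from emits_Seq_inv[OF seq_sub.prems(1)] show ?case
  proof
    assume r2: "r2 = (X, map (\<lambda>k. seq_sym i p k (es ! k)) [0..<length es])"
    with seq_sub.prems have "seq_sym i p j2 (es ! j2) = N (Fresh i q)" by simp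
    from seq_sym_Fresh[OF this] q show ?thesis by simp
  next
    assume "\<exists>k<length es. \<not> is_Sym (es ! k) \<and> emits i (p @ [k]) (Fresh i (p @ [k])) (es ! k) r2"
    then obtain k' where k': "emits i (p @ [k']) (Fresh i (p @ [k'])) (es ! k') r2" by blast
    from I1[OF k' _ seq_sub.prems(6-8)] obtain k2 q2 where "q = (p @ [k']) @ k2 # q2" by auto
    with q have "k' = k" by simp
    with k' seq_sub.IH[of r2 j1 j2] seq_sub.prems show ?thesis by simp
  qed
next
  case (alt k es i p X r)
  from I1[OF alt.hyps(2) _ alt.prems(3-5)] alt.prems(2) obtain k1 q1 where q: "q = (p @ [k]) @ k1 # q1" by auto
  from emits_Alt_inv[OF alt.prems(1)] obtain k' where k': "emits i (p @ [k']) X (es ! k') r2" by blast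
  from I1[OF k' _ alt.prems(6-8)] alt.prems(2) obtain k2 q2 where "q = (p @ [k']) @ k2 # q2" by auto
  with q have "k' = k" by simp
  with k' alt.IH[of r2 j1 j2] alt.prems show ?case by simp
next
  case (opt_sub i p X e r)
  from emits_Opt_inv[OF opt_sub.prems(1)] show ?case
  proof
    assume "r2 = (X, [])" with opt_sub.prems show ?thesis by simp
  next
    assume "emits i (p @ [0]) X e r2"
    with opt_sub.IH[of r2 j1 j2] opt_sub.prems show ?thesis by simp
  qed
next
  case (opt_eps i p X e) then show ?case by simp
next
  case (star_sub i p e r X)
  from I1[OF star_sub.hyps(1) _ star_sub.prems(3-5)] obtain k1 q1 where q: "q = (p @ [0]) @ k1 # q1" by auto
  from emits_Star_inv[OF star_sub.prems(1)] consider "r2 = (X, [])" | "r2 = (X, [N (Fresh i (p @ [0])), N X])"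
     | "emits i (p @ [0]) (Fresh i (p @ [0])) e r2" by blast
  then show ?case
  proof cases
    case 1 with star_sub.prems show ?thesis by simp
  next
    case 2 with star_sub.prems q show ?thesis by (cases j2) auto
  next
    case 3 with star_sub.IH[of r2 j1 j2] star_sub.prems show ?thesis by simp
  qed
next
  case (star_cons i p X e)
  then have j1: "j1 = 0" "q = p @ [0]" by (cases j1; auto)+
  from emits_Star_inv[OF star_cons.prems(1)] consider "r2 = (X, [])" | "r2 = (X, [N (Fresh i (p @ [0])), N X])"
     | "emits i (p @ [0]) (Fresh i (p @ [0])) e r2" by blast
  then show ?case
  proof cases
    case 1 with star_cons.prems show ?thesis by simp
  next
    case 2 with star_cons.prems j1 show ?thesis by (cases j2) auto
  next
    case 3 from I1[OF 3 _ star_cons.prems(6-8)] j1 show ?thesis by auto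
  qed
next
  case (star_nil i p X e) then show ?case by simp
qed

lemma flat_I1: "(Z,\<eta>) \<in> flatten rules \<Longrightarrow> j < length \<eta> \<Longrightarrow> \<eta> ! j = N (Fresh i q)
  \<Longrightarrow> \<not> (Suc j = length \<eta> \<and> Fresh i q = Z)
  \<Longrightarrow> i < length rules \<and> emits i [] (Top (fst (rules ! i))) (snd (rules ! i)) (Z,\<eta>) \<and> mu Z < mu (Fresh i q)"
proof -
  assume a: "(Z,\<eta>) \<in> flatten rules" "j < length \<eta>" "\<eta> ! j = N (Fresh i q)" "\<not> (Suc j = length \<eta> \<and> Fresh i q = Z)"
  then obtain i0 where i0: "i0 < length rules" "emits i0 [] (Top (fst (rules ! i0))) (snd (rules ! i0)) (Z,\<eta>)"
    unfolding flatten_def by auto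
  from I1[OF i0(2) _ _ _ , of j i q] a have "i = i0 \<and> mu Z < mu (Fresh i q)" by auto
  with i0 show ?thesis by auto
qed

lemma parent_unique: "(Z1,\<eta>1) \<in> flatten rules \<Longrightarrow> j1 < length \<eta>1 \<Longrightarrow> \<eta>1 ! j1 = N (Fresh i q)
  \<Longrightarrow> \<not> (Suc j1 = length \<eta>1 \<and> Fresh i q = Z1)
  \<Longrightarrow> (Z2,\<eta>2) \<in> flatten rules \<Longrightarrow> j2 < length \<eta>2 \<Longrightarrow> \<eta>2 ! j2 = N (Fresh i q)
  \<Longrightarrow> \<not> (Suc j2 = length \<eta>2 \<and> Fresh i q = Z2)
  \<Longrightarrow> Z1 = Z2 \<and> \<eta>1 = \<eta>2 \<and> j1 = j2"
  using I2[of i "[]" _ _ "(Z1,\<eta>1)" "(Z2,\<eta>2)" j1 q j2] flat_I1[of Z1 \<eta>1 rules j1 i q] flat_I1[of Z2 \<eta>2 rules j2 i q]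
  by auto

lemma cps_sym_unique:
  assumes tr: "\<forall>X\<in>Tr. \<exists>i q. X = Fresh i q"
  shows "cps_sym (flatten rules) Tr Y \<tau>1 \<Longrightarrow> cps_sym (flatten rules) Tr Y \<tau>2 \<Longrightarrow> \<tau>1 = \<tau>2"
proof (induction "mu Y" arbitrary: Y \<tau>1 \<tau>2 rule: less_induct)
  case less
  show ?case
  proof (cases "Y \<in> Tr")
    case False
    then show ?thesis using notTr less.prems by metis
  next
    case True
    then obtain i q where Y: "Y = Fresh i q" using tr by blast
    from C3[OF less.prems(1) True] obtain X1 \<eta>1 j1 \<sigma>1 where
      a: "(X1,\<eta>1) \<in> flatten rules" "j1 < length \<eta>1" "\<eta>1 ! j1 = N Y" "\<not> (Suc j1 = length \<eta>1 \<and> Y = X1)"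
         "cps_sym (flatten rules) Tr X1 \<sigma>1" "\<tau>1 = cc Tr (drop (Suc j1) \<eta>1) \<sigma>1" by blast
    from C3[OF less.prems(2) True] obtain X2 \<eta>2 j2 \<sigma>2 where
      b: "(X2,\<eta>2) \<in> flatten rules" "j2 < length \<eta>2" "\<eta>2 ! j2 = N Y" "\<not> (Suc j2 = length \<eta>2 \<and> Y = X2)"
         "cps_sym (flatten rules) Tr X2 \<sigma>2" "\<tau>2 = cc Tr (drop (Suc j2) \<eta>2) \<sigma>2" by blast
    from parent_unique[OF a(1-4)[unfolded Y] b(1-4)[unfolded Y]] have e: "X1 = X2" "\<eta>1 = \<eta>2" "j1 = j2" by auto
    from flat_I1[OF a(1-4)[unfolded Y]] have "mu X1 < mu Y" using Y by simp
    from less.hyps[OF this a(5)] b(5) e have "\<sigma>1 = \<sigma>2" by simp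
    with a(6) b(6) e show ?thesis by simp
  qed
qed

theorem mainTheorem3:
  fixes rules :: "('n \<times> ('t, 'n) expr) list"
    and Tr :: "'n fnt set"
    and s :: 'n
  assumes "\<forall>X \<in> Tr. cps_eligible (flatten rules) X"
  shows "\<forall>w :: 't list.
           derives (flatten rules) [N (Top s)] (map T w)
       \<longleftrightarrow> derives (CPS (flatten rules) Tr) [N (Hat (Top s))] (map T w)"
proof
  fix w :: "'t list"
  let ?G = "flatten rules"
  have tr: "\<forall>X\<in>Tr. \<exists>i q. X = Fresh i q" using assms unfolding cps_eligible_def by blast
  have sT: "Top s \<notin> Tr" using tr by auto
  have U: "\<forall>Y \<tau>1 \<tau>2. cps_sym ?G Tr Y \<tau>1 \<longrightarrow> cps_sym ?G Tr Y \<tau>2 \<longrightarrow> \<tau>1 = \<tau>2"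
    using cps_sym_unique[OF tr] by blast
  show "derives ?G [N (Top s)] (map T w) \<longleftrightarrow> derives (CPS ?G Tr) [N (Hat (Top s))] (map T w)"
  proof
    assume "derives ?G [N (Top s)] (map T w)"
    then obtain n where "gn ?G n [N (Top s)] w" using derives_gn by metis
    then obtain n1 \<alpha> where h: "(Top s, \<alpha>) \<in> ?G" "gn ?G n1 \<alpha> w" by auto
    have cs: "cps_sym ?G Tr (Top s) []" using start[of "Top s" ?G Tr] sT h(1) unfolding nts_def by blast
    from D1[OF h(2) h(1) cs _ gn_nil, of 0] obtain k where "gn (CPS ?G Tr) k (cc Tr \<alpha> []) w" by auto
    from gn_N[OF CPS_prodI[OF cs h(1)] this gn_nil]
    have "gn (CPS ?G Tr) (Suc (k + 0)) [N (Hat (Top s))] w" by simp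
    then show "derives (CPS ?G Tr) [N (Hat (Top s))] (map T w)" by (rule gn_derives)
  next
    assume "derives (CPS ?G Tr) [N (Hat (Top s))] (map T w)"
    then obtain n where "gn (CPS ?G Tr) n [N (Hat (Top s))] w" using derives_gn by metis
    then obtain n1 \<gamma> where h: "(Hat (Top s), \<gamma>) \<in> CPS ?G Tr" "gn (CPS ?G Tr) n1 \<gamma> w" by auto
    from CPS_prodE[OF h(1)] obtain \<tau>' \<eta>' where p: "cps_sym ?G Tr (Top s) \<tau>'" "(Top s,\<eta>') \<in> ?G" "\<gamma> = cc Tr \<eta>' \<tau>'"
      by blast
    have "\<tau>' = []" using notTr[OF p(1) sT] .
    have "\<exists>w1 v m. w = w1 @ v \<and> (\<exists>k. gn ?G k (drop 0 \<eta>') w1) \<and> gn (CPS ?G Tr) m \<tau>' v \<and> m \<le> n1"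
      by (rule D2[of ?G Tr, OF U h(2) p(2,1)]) (metis p(3) drop0)
    then obtain w1 v m k where
      r: "w = w1 @ v" "gn ?G k \<eta>' w1" "gn (CPS ?G Tr) m \<tau>' v" by auto
    have "v = []" using r(3) \<open>\<tau>' = []\<close> by auto
    from gn_N[OF p(2) r(2) gn_nil] have "gn ?G (Suc (k + 0)) [N (Top s)] w" using r(1) \<open>v = []\<close> by simp
    then show "derives ?G [N (Top s)] (map T w)" by (rule gn_derives)
  qed
qed

end
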